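(* Let $\Delta$ be a simplicial polytopal fan in $\mathbb{R}^d$ with ray generators $\mathbf{v}_1,\ldots,\mathbf{v}_n$ and let $m\ge1$. Let $\Delta^m$ be the polyhedral fan in $\mathbb{R}^{m\times d}$ whose cells are the products $\sigma_1\times\cdots\times\sigma_m$ with $\sigma_j\in\Delta$, and let $\Upsilon$ be the collection of all closed cones $\overline{U_G}$, $G\in\mathcal{G}$, such that $G$ has no matching of size $n$. Then $\Upsilon$ is strictly contained in $\Delta^m$ if and only if $m\ge n$.
   Context: A fan is simplicial if every cone is generated by linearly independent vectors; polytopal if it is the normal fan of a polytope. For $\mathbf{u}\in\mathbb{R}^d$, with $\sigma$ the cone of $\Delta$ containing $\mathbf{u}$ in its relative interior and $\mathbf{u}=\sum_{k\in I_\sigma}\lambda_k\mathbf{v}_k$ over the generators of $\sigma$, set $[\mathbf{u}]_i=\lambda_i$ for $i\in I_\sigma$ and $0$ otherwise. For $U\in\mathbb{R}^{m\times d}$ with rows $\mathbf{u}^{(1)},\ldots,\mathbf{u}^{(m)}$, $G_U$ is the bipartite graph on $[n]\sqcup[m]$ with $i\in[n]$ adjacent to $j\in[m]$ iff $[\mathbf{u}^{(j)}]_i>0$. $\mathcal{G}$ is the set of graphs of the form $G_U$, and for $G\in\mathcal{G}$, $U_G=\{U\in\mathbb{R}^{m\times d}\colon G_U=G\}$; the closures $\overline{U_G}$ are exactly the cells of $\Delta^m$. *)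

theory Defs
  imports "HOL-Analysis.Analysis"
begin

definition pos_hull :: "(nat \<Rightarrow> 'a::real_vector) \<Rightarrow> nat set \<Rightarrow> 'a set" where
  "pos_hull v I = {x. \<exists>c. (\<forall>i\<in>I. 0 \<le> c i) \<and> x = (\<Sum>i\<in>I. c i *\<^sub>R v i)}"

text \<open>A simplicial fan with ray generators v 0, ..., v (n-1), given by the family F of
  index sets of its cones: cone(sigma) = pos_hull v sigma.\<close>
definition simplicial_fan :: "nat \<Rightarrow> (nat \<Rightarrow> real^'d) \<Rightarrow> nat set set \<Rightarrow> bool" where
  "simplicial_fan n v F \<longleftrightarrow>
     F \<noteq> {} \<and>
     (\<forall>\<sigma>\<in>F. \<sigma> \<subseteq> {0..<n}) \<and>
     (\<forall>\<sigma>\<in>F. \<forall>\<tau>. \<tau> \<subseteq> \<sigma> \<longrightarrow> \<tau> \<in> F) \<and>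
     (\<forall>i<n. {i} \<in> F) \<and>
     inj_on v {0..<n} \<and>
     (\<forall>\<sigma>\<in>F. inj_on v \<sigma> \<and> independent (v ` \<sigma>)) \<and>
     (\<forall>\<sigma>\<in>F. \<forall>\<tau>\<in>F. pos_hull v \<sigma> \<inter> pos_hull v \<tau> = pos_hull v (\<sigma> \<inter> \<tau>))"

definition normal_cone :: "(real^'d) set \<Rightarrow> (real^'d) set \<Rightarrow> (real^'d) set" where
  "normal_cone P G = {c. \<forall>x\<in>G. \<forall>y\<in>P. c \<bullet> y \<le> c \<bullet> x}"

definition polytopal_fan :: "(nat \<Rightarrow> real^'d) \<Rightarrow> nat set set \<Rightarrow> bool" where
  "polytopal_fan v F \<longleftrightarrow>
     (\<exists>P. polytope P \<and>
          {pos_hull v \<sigma> | \<sigma>. \<sigma> \<in> F} = {normal_cone P G | G. G face_of P \<and> G \<noteq> {}})"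

definition fan_coord :: "(nat \<Rightarrow> real^'d) \<Rightarrow> nat set set \<Rightarrow> real^'d \<Rightarrow> nat \<Rightarrow> real" where
  "fan_coord v F u i =
     (if \<exists>\<sigma>\<in>F. u \<in> rel_interior (pos_hull v \<sigma>) \<and> i \<in> \<sigma>
      then (THE l. \<exists>\<sigma>\<in>F. \<exists>c. u \<in> rel_interior (pos_hull v \<sigma>) \<and> i \<in> \<sigma> \<and>
                          u = (\<Sum>k\<in>\<sigma>. c k *\<^sub>R v k) \<and> l = c i)
      else 0)"

text \<open>The bipartite graph G_U on [n] (left, nat indices < n) and rows of U (right, type 'm):
  edge (i, j) iff [U_j]_i > 0.\<close>
definition graph_of :: "nat \<Rightarrow> (nat \<Rightarrow> real^'d) \<Rightarrow> nat set set \<Rightarrow> real^'d^'m \<Rightarrow> (nat \<times> 'm) set" where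
  "graph_of n v F U = {(i, j). i < n \<and> 0 < fan_coord v F (U $ j) i}"

definition has_matching :: "('a \<times> 'b) set \<Rightarrow> nat \<Rightarrow> bool" where
  "has_matching G k \<longleftrightarrow> (\<exists>M. M \<subseteq> G \<and> finite M \<and> card M = k \<and> inj_on fst M \<and> inj_on snd M)"

definition U_of :: "nat \<Rightarrow> (nat \<Rightarrow> real^'d) \<Rightarrow> nat set set \<Rightarrow> (nat \<times> 'm) set \<Rightarrow> (real^'d^'m) set" where
  "U_of n v F G = {U. graph_of n v F U = G}"

definition Upsilon :: "nat \<Rightarrow> (nat \<Rightarrow> real^'d) \<Rightarrow> nat set set \<Rightarrow> (real^'d^'m) set set" where
  "Upsilon n v F = {closure (U_of n v F G) | G. G \<in> range (graph_of n v F) \<and> \<not> has_matching G n}"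

definition Delta_pow :: "(nat \<Rightarrow> real^'d) \<Rightarrow> nat set set \<Rightarrow> (real^'d^'m) set set" where
  "Delta_pow v F = {{U. \<forall>j. U $ j \<in> pos_hull v (\<sigma> j)} | \<sigma>. \<forall>j. \<sigma> j \<in> F}"

end

theory Submission
  imports Defs
begin

lemma coord_fun:
  fixes v :: "nat \<Rightarrow> real^'d"
  assumes "independent (v`\<sigma>)" "inj_on v \<sigma>" "k\<in>\<sigma>"
  shows "\<exists>f::real^'d \<Rightarrow> real. linear f \<and> (\<forall>l\<in>\<sigma>. f (v l) = (if l = k then 1 else 0))"
proof -
  obtain g :: "real^'d \<Rightarrow> real" where g: "linear g" "\<forall>x\<in>v`\<sigma>. g x = (if x = v k then 1 else 0)"
    using linear_independent_extend[OF assms(1), of "\<lambda>x. if x = v k then 1 else (0::real)"] by auto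
  have "\<forall>l\<in>\<sigma>. g (v l) = (if l = k then 1 else 0)"
  proof
    fix l assume l: "l \<in> \<sigma>"
    have "(v l = v k) = (l = k)" using inj_on_eq_iff[OF assms(2) l assms(3)] .
    then show "g (v l) = (if l = k then 1 else 0)" using g(2) l by simp
  qed
  then show ?thesis using g(1) by (intro exI[of _ g]) simp
qed

lemma coord_apply:
  fixes v :: "nat \<Rightarrow> real^'d"
  assumes "linear f" "\<forall>l\<in>\<sigma>. f (v l) = (if l = k then 1 else (0::real))" "finite \<sigma>" "k \<in> \<sigma>"
  shows "f (\<Sum>l\<in>\<sigma>. c l *\<^sub>R v l) = c k"
proof -
  have "f (\<Sum>l\<in>\<sigma>. c l *\<^sub>R v l) = (\<Sum>l\<in>\<sigma>. c l * f (v l))"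
    using assms(1) by (simp add: linear_sum linear_scale)
  also have "\<dots> = (\<Sum>l\<in>\<sigma>. if l = k then c l else 0)"
    using assms(2) by (intro sum.cong) auto
  also have "\<dots> = c k" using assms(3,4) by simp
  finally show ?thesis .
qed

lemma coef_unique:
  fixes v :: "nat \<Rightarrow> real^'d"
  assumes "finite \<sigma>" "independent (v`\<sigma>)" "inj_on v \<sigma>" "k\<in>\<sigma>"
    and "(\<Sum>l\<in>\<sigma>. c l *\<^sub>R v l) = (\<Sum>l\<in>\<sigma>. d l *\<^sub>R v l)"
  shows "c k = d k"
proof -
  obtain f :: "real^'d \<Rightarrow> real" where f: "linear f" "\<forall>l\<in>\<sigma>. f (v l) = (if l = k then 1 else 0)"
    using coord_fun[OF assms(2,3,4)] by blast
  show ?thesis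
    using coord_apply[OF f assms(1,4), of c] coord_apply[OF f assms(1,4), of d] assms(5) by simp
qed

lemma pos_hull_closed:
  fixes v :: "nat \<Rightarrow> real^'d"
  assumes "finite \<sigma>" "independent (v`\<sigma>)" "inj_on v \<sigma>"
  shows "closed (pos_hull v \<sigma>)"
proof -
  have ex: "\<forall>k\<in>\<sigma>. \<exists>f::real^'d \<Rightarrow> real. linear f \<and> (\<forall>l\<in>\<sigma>. f (v l) = (if l = k then 1 else 0))"
    using coord_fun[OF assms(2,3)] by blast
  obtain F where F: "\<And>k. k\<in>\<sigma> \<Longrightarrow> linear (F k) \<and> (\<forall>l\<in>\<sigma>. F k (v l) = (if l = k then 1 else (0::real)))"
    using bchoice[OF ex] by blast
  have eq: "pos_hull v \<sigma> = span (v`\<sigma>) \<inter> (\<Inter>k\<in>\<sigma>. {x. 0 \<le> F k x})"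
  proof
    show "pos_hull v \<sigma> \<subseteq> span (v`\<sigma>) \<inter> (\<Inter>k\<in>\<sigma>. {x. 0 \<le> F k x})"
    proof
      fix x assume "x \<in> pos_hull v \<sigma>"
      then obtain c where c: "\<forall>i\<in>\<sigma>. 0 \<le> c i" "x = (\<Sum>i\<in>\<sigma>. c i *\<^sub>R v i)"
        unfolding pos_hull_def by blast
      have "x \<in> span (v`\<sigma>)" unfolding c(2)
        by (intro span_sum span_scale span_base) auto
      moreover have "\<forall>k\<in>\<sigma>. 0 \<le> F k x"
      proof
        fix k assume k: "k\<in>\<sigma>"
        have "F k x = c k" unfolding c(2)
          using coord_apply[OF conjunct1[OF F[OF k]] conjunct2[OF F[OF k]] assms(1) k] by simp
        then show "0 \<le> F k x" using c(1) k by simp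
      qed
      ultimately show "x \<in> span (v`\<sigma>) \<inter> (\<Inter>k\<in>\<sigma>. {x. 0 \<le> F k x})" by blast
    qed
  next
    show "span (v`\<sigma>) \<inter> (\<Inter>k\<in>\<sigma>. {x. 0 \<le> F k x}) \<subseteq> pos_hull v \<sigma>"
    proof
      fix x assume x: "x \<in> span (v`\<sigma>) \<inter> (\<Inter>k\<in>\<sigma>. {x. 0 \<le> F k x})"
      then obtain u where "x = (\<Sum>y\<in>v`\<sigma>. u y *\<^sub>R y)"
        using span_finite[of "v`\<sigma>"] assms(1) by auto
      also have "\<dots> = (\<Sum>l\<in>\<sigma>. u (v l) *\<^sub>R v l)"
        using sum.reindex[OF assms(3), of "\<lambda>y. u y *\<^sub>R y"] by simp
      finally have xe: "x = (\<Sum>l\<in>\<sigma>. u (v l) *\<^sub>R v l)" .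
      have "\<forall>k\<in>\<sigma>. 0 \<le> u (v k)"
      proof
        fix k assume k: "k\<in>\<sigma>"
        have "F k x = u (v k)" unfolding xe
          using coord_apply[OF conjunct1[OF F[OF k]] conjunct2[OF F[OF k]] assms(1) k] by simp
        moreover have "0 \<le> F k x" using x k by blast
        ultimately show "0 \<le> u (v k)" by simp
      qed
      then show "x \<in> pos_hull v \<sigma>" unfolding pos_hull_def using xe
        by (intro CollectI exI[of _ "\<lambda>i. u (v i)"]) simp
    qed
  qed
  show ?thesis unfolding eq
  proof (intro closed_Int closed_span closed_INT ballI)
    fix k assume k: "k\<in>\<sigma>"
    have "bounded_linear (F k)" using F[OF k] linear_conv_bounded_linear by blast
    then have "continuous_on UNIV (F k)" by (simp add: linear_continuous_on)
    then show "closed {x. 0 \<le> F k x}"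
      using closed_Collect_le[of "\<lambda>_. 0" "F k"] continuous_on_const by blast
  qed
qed


lemma lin_comb_sum:
  fixes v :: "nat \<Rightarrow> 'a::real_vector"
  shows "a *\<^sub>R (\<Sum>i\<in>\<sigma>. d i *\<^sub>R v i) + b *\<^sub>R (\<Sum>i\<in>\<sigma>. c i *\<^sub>R v i) = (\<Sum>i\<in>\<sigma>. (a * d i + b * c i) *\<^sub>R v i)"
  by (simp add: scaleR_sum_right sum.distrib scaleR_add_left)

lemma pos_hull_convex:
  fixes v :: "nat \<Rightarrow> real^'d"
  shows "convex (pos_hull v \<sigma>)"
  unfolding convex_def
proof (intro ballI allI impI)
  fix x y and a b :: real
  assume x: "x \<in> pos_hull v \<sigma>" and y: "y \<in> pos_hull v \<sigma>" and ab: "0 \<le> a" "0 \<le> b" "a + b = 1"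
  obtain c where c: "\<forall>i\<in>\<sigma>. 0 \<le> c i" "x = (\<Sum>i\<in>\<sigma>. c i *\<^sub>R v i)"
    using x unfolding pos_hull_def by blast
  obtain d where d: "\<forall>i\<in>\<sigma>. 0 \<le> d i" "y = (\<Sum>i\<in>\<sigma>. d i *\<^sub>R v i)"
    using y unfolding pos_hull_def by blast
  have "a *\<^sub>R x + b *\<^sub>R y = (\<Sum>i\<in>\<sigma>. (a * c i + b * d i) *\<^sub>R v i)"
    unfolding c(2) d(2) by (simp add: scaleR_sum_right sum.distrib scaleR_add_left)
  moreover have "\<forall>i\<in>\<sigma>. 0 \<le> a * c i + b * d i" using c(1) d(1) ab by simp
  ultimately show "a *\<^sub>R x + b *\<^sub>R y \<in> pos_hull v \<sigma>"
    unfolding pos_hull_def by (intro CollectI exI[of _ "\<lambda>i. a * c i + b * d i"]) simp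
qed

lemma zero_in_pos_hull: "0 \<in> pos_hull v \<sigma>"
  unfolding pos_hull_def by (intro CollectI exI[of _ "\<lambda>i. 0"]) simp

lemma rel_interior_pos_hull:
  fixes v :: "nat \<Rightarrow> real^'d"
  assumes fin: "finite \<sigma>" and ind: "independent (v`\<sigma>)" and inj: "inj_on v \<sigma>"
  shows "rel_interior (pos_hull v \<sigma>) = {x. \<exists>c. (\<forall>i\<in>\<sigma>. 0 < c i) \<and> x = (\<Sum>i\<in>\<sigma>. c i *\<^sub>R v i)}"
proof -
  have cv: "convex (pos_hull v \<sigma>)" and ne: "pos_hull v \<sigma> \<noteq> {}"
    using pos_hull_convex zero_in_pos_hull[of v \<sigma>] by auto
  show ?thesis
  proof (intro set_eqI iffI)
    fix z assume z: "z \<in> rel_interior (pos_hull v \<sigma>)"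
    have x1: "(\<Sum>i\<in>\<sigma>. 1 *\<^sub>R v i) \<in> pos_hull v \<sigma>"
      unfolding pos_hull_def by (intro CollectI exI[of _ "\<lambda>i. 1"]) simp
    obtain e where e: "e > 1" "(1 - e) *\<^sub>R (\<Sum>i\<in>\<sigma>. 1 *\<^sub>R v i) + e *\<^sub>R z \<in> pos_hull v \<sigma>"
      using z x1 convex_rel_interior_iff[OF cv ne] by blast
    then obtain d where d: "\<forall>i\<in>\<sigma>. 0 \<le> d i"
      "(1 - e) *\<^sub>R (\<Sum>i\<in>\<sigma>. 1 *\<^sub>R v i) + e *\<^sub>R z = (\<Sum>i\<in>\<sigma>. d i *\<^sub>R v i)"
      unfolding pos_hull_def by blast
    have "e *\<^sub>R z = (\<Sum>i\<in>\<sigma>. d i *\<^sub>R v i) - (1 - e) *\<^sub>R (\<Sum>i\<in>\<sigma>. 1 *\<^sub>R v i)"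
      using d(2) by (simp add: algebra_simps)
    also have "\<dots> = (\<Sum>i\<in>\<sigma>. (d i + e - 1) *\<^sub>R v i)"
      by (simp add: scaleR_sum_right sum_subtractf[symmetric] algebra_simps)
    finally have ez: "e *\<^sub>R z = (\<Sum>i\<in>\<sigma>. (d i + e - 1) *\<^sub>R v i)" .
    have "(\<Sum>i\<in>\<sigma>. ((d i + e - 1) / e) *\<^sub>R v i) = (1/e) *\<^sub>R (\<Sum>i\<in>\<sigma>. (d i + e - 1) *\<^sub>R v i)"
      by (simp add: scaleR_sum_right)
    also have "\<dots> = (1/e) *\<^sub>R (e *\<^sub>R z)" using ez by simp
    also have "\<dots> = z" using e(1) by simp
    finally have zz: "z = (\<Sum>i\<in>\<sigma>. ((d i + e - 1) / e) *\<^sub>R v i)" by simp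
    have "\<forall>i\<in>\<sigma>. 0 < (d i + e - 1) / e" using d(1) e(1) by auto
    then show "z \<in> {x. \<exists>c. (\<forall>i\<in>\<sigma>. 0 < c i) \<and> x = (\<Sum>i\<in>\<sigma>. c i *\<^sub>R v i)}"
      using zz by (intro CollectI exI[of _ "\<lambda>i. (d i + e - 1) / e"]) simp
  next
    fix z assume "z \<in> {x. \<exists>c. (\<forall>i\<in>\<sigma>. 0 < c i) \<and> x = (\<Sum>i\<in>\<sigma>. c i *\<^sub>R v i)}"
    then obtain c where c: "\<forall>i\<in>\<sigma>. 0 < c i" "z = (\<Sum>i\<in>\<sigma>. c i *\<^sub>R v i)" by blast
    have "\<forall>x\<in>pos_hull v \<sigma>. \<exists>e>1. (1 - e) *\<^sub>R x + e *\<^sub>R z \<in> pos_hull v \<sigma>"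
    proof
      fix x assume "x \<in> pos_hull v \<sigma>"
      then obtain d where d: "\<forall>i\<in>\<sigma>. 0 \<le> d i" "x = (\<Sum>i\<in>\<sigma>. d i *\<^sub>R v i)"
        unfolding pos_hull_def by blast
      define t where "t = Min (insert 1 ((\<lambda>i. c i / (d i + 1)) ` \<sigma>))"
      have tpos: "0 < t" unfolding t_def using fin c(1) d(1)
        by (subst Min_gr_iff) auto
      have tle: "t \<le> c i / (d i + 1)" if "i \<in> \<sigma>" for i
        unfolding t_def using fin that by (intro Min_le) auto
      have coef: "0 \<le> (1 - (1 + t)) * d i + (1 + t) * c i" if i: "i \<in> \<sigma>" for i
      proof -
        have d0: "0 \<le> d i" "0 < c i" using d(1) c(1) i by auto
        have "t * (d i + 1) \<le> c i" using tle[OF i] d0 by (simp add: pos_le_divide_eq)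
        then have "t * d i \<le> c i" using tpos by (simp add: algebra_simps)
        moreover have "0 \<le> t * c i" using tpos d0 by simp
        ultimately show ?thesis by (simp add: algebra_simps)
      qed
      have "(1 - (1 + t)) *\<^sub>R x + (1 + t) *\<^sub>R z = (\<Sum>i\<in>\<sigma>. ((1 - (1 + t)) * d i + (1 + t) * c i) *\<^sub>R v i)"
        unfolding d(2) c(2) by (rule lin_comb_sum)
      then have "(1 - (1 + t)) *\<^sub>R x + (1 + t) *\<^sub>R z \<in> pos_hull v \<sigma>"
        unfolding pos_hull_def using coef
        by (intro CollectI exI[of _ "\<lambda>i. (1 - (1 + t)) * d i + (1 + t) * c i"]) simp
      then show "\<exists>e>1. (1 - e) *\<^sub>R x + e *\<^sub>R z \<in> pos_hull v \<sigma>"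
        using tpos by (intro exI[of _ "1 + t"]) simp
    qed
    then show "z \<in> rel_interior (pos_hull v \<sigma>)"
      using convex_rel_interior_iff[OF cv ne] by blast
  qed
qed


lemma sf_D:
  assumes "simplicial_fan n v F"
  shows "F \<noteq> {}" "\<forall>\<sigma>\<in>F. \<sigma> \<subseteq> {0..<n}" "\<forall>\<sigma>\<in>F. \<forall>\<tau>. \<tau> \<subseteq> \<sigma> \<longrightarrow> \<tau> \<in> F"
    "\<forall>i<n. {i} \<in> F" "\<forall>\<sigma>\<in>F. inj_on v \<sigma> \<and> independent (v ` \<sigma>)"
    "\<forall>\<sigma>\<in>F. \<forall>\<tau>\<in>F. pos_hull v \<sigma> \<inter> pos_hull v \<tau> = pos_hull v (\<sigma> \<inter> \<tau>)"
  using assms unfolding simplicial_fan_def by simp_all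

lemma sf_facts:
  assumes "simplicial_fan n v F" "\<sigma> \<in> F"
  shows "finite \<sigma>" "inj_on v \<sigma>" "independent (v`\<sigma>)" "\<sigma> \<subseteq> {0..<n}"
proof -
  show sub: "\<sigma> \<subseteq> {0..<n}" using sf_D(2)[OF assms(1)] assms(2) by (rule bspec)
  then show "finite \<sigma>" using finite_subset by blast
  have "inj_on v \<sigma> \<and> independent (v ` \<sigma>)" using sf_D(5)[OF assms(1)] assms(2) by (rule bspec)
  then show "inj_on v \<sigma>" "independent (v`\<sigma>)" by auto
qed

lemma sf_sub:
  assumes "simplicial_fan n v F" "\<sigma> \<in> F" "\<tau> \<subseteq> \<sigma>"
  shows "\<tau> \<in> F"
  using sf_D(3)[OF assms(1)] assms(2,3) by blast

lemma sf_int: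
  assumes "simplicial_fan n v F" "\<sigma> \<in> F" "\<tau> \<in> F"
  shows "pos_hull v \<sigma> \<inter> pos_hull v \<tau> = pos_hull v (\<sigma> \<inter> \<tau>)"
  using sf_D(6)[OF assms(1)] assms(2,3) by blast

lemma sf_relint:
  assumes "simplicial_fan n v F" "\<sigma> \<in> F"
  shows "rel_interior (pos_hull v \<sigma>) = {x. \<exists>c. (\<forall>i\<in>\<sigma>. 0 < c i) \<and> x = (\<Sum>i\<in>\<sigma>. c i *\<^sub>R v i)}"
  using rel_interior_pos_hull sf_facts[OF assms] by blast

lemma relint_unique1:
  assumes sf: "simplicial_fan n v F" and st: "\<sigma> \<in> F" "\<tau> \<in> F"
    and u: "u \<in> rel_interior (pos_hull v \<sigma>)" "u \<in> rel_interior (pos_hull v \<tau>)"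
  shows "\<sigma> \<subseteq> \<tau>"
proof
  fix k assume k: "k \<in> \<sigma>"
  obtain c where c: "\<forall>i\<in>\<sigma>. 0 < c i" "u = (\<Sum>i\<in>\<sigma>. c i *\<^sub>R v i)"
    using u(1) sf_relint[OF sf st(1)] by blast
  have "u \<in> pos_hull v \<sigma> \<inter> pos_hull v \<tau>"
    using u rel_interior_subset by blast
  also have "\<dots> = pos_hull v (\<sigma> \<inter> \<tau>)"
    using sf_int[OF sf st] .
  finally obtain d where d: "\<forall>i\<in>\<sigma> \<inter> \<tau>. 0 \<le> d i" "u = (\<Sum>i\<in>\<sigma> \<inter> \<tau>. d i *\<^sub>R v i)"
    unfolding pos_hull_def by blast
  define d' where "d' i = (if i \<in> \<tau> then d i else 0)" for i
  have fin: "finite \<sigma>" using sf_facts[OF sf st(1)] by blast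
  have "(\<Sum>i\<in>\<sigma> \<inter> \<tau>. d i *\<^sub>R v i) = (\<Sum>i\<in>\<sigma>. if i \<in> \<tau> then d i *\<^sub>R v i else 0)"
    by (rule sum.inter_restrict[OF fin])
  also have "\<dots> = (\<Sum>i\<in>\<sigma>. d' i *\<^sub>R v i)"
    unfolding d'_def by (intro sum.cong) auto
  finally have "(\<Sum>i\<in>\<sigma>. c i *\<^sub>R v i) = (\<Sum>i\<in>\<sigma>. d' i *\<^sub>R v i)" using c(2) d(2) by simp
  then show "k \<in> \<tau>" using c(1) k coef_unique[OF fin sf_facts(3,2)[OF sf st(1)] k, of c d'] unfolding d'_def by (auto split: if_splits)
qed

lemma relint_unique:
  assumes sf: "simplicial_fan n v F" and st: "\<sigma> \<in> F" "\<tau> \<in> F"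
    and u: "u \<in> rel_interior (pos_hull v \<sigma>)" "u \<in> rel_interior (pos_hull v \<tau>)"
  shows "\<sigma> = \<tau>"
  using relint_unique1[OF sf st u] relint_unique1[OF sf st(2,1) u(2,1)] by blast

lemma fan_coord_eq:
  assumes sf: "simplicial_fan n v F" and st: "\<sigma> \<in> F"
    and c: "\<forall>i\<in>\<sigma>. 0 < c i" and u: "u = (\<Sum>i\<in>\<sigma>. c i *\<^sub>R v i)"
  shows "fan_coord v F u i = (if i \<in> \<sigma> then c i else 0)"
proof -
  have ur: "u \<in> rel_interior (pos_hull v \<sigma>)"
    using sf_relint[OF sf st] c u by blast
  have uniq: "\<tau> = \<sigma>" if "\<tau> \<in> F" "u \<in> rel_interior (pos_hull v \<tau>)" for \<tau>
    using relint_unique[OF sf that(1) st that(2) ur] .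
  show ?thesis
  proof (cases "i \<in> \<sigma>")
    case True
    have ex: "\<exists>\<sigma>\<in>F. u \<in> rel_interior (pos_hull v \<sigma>) \<and> i \<in> \<sigma>" using st ur True by blast
    have "(THE l. \<exists>\<sigma>\<in>F. \<exists>c. u \<in> rel_interior (pos_hull v \<sigma>) \<and> i \<in> \<sigma> \<and>
                          u = (\<Sum>k\<in>\<sigma>. c k *\<^sub>R v k) \<and> l = c i) = c i"
    proof (rule the_equality)
      show "\<exists>\<sigma>'\<in>F. \<exists>c'. u \<in> rel_interior (pos_hull v \<sigma>') \<and> i \<in> \<sigma>' \<and>
                          u = (\<Sum>k\<in>\<sigma>'. c' k *\<^sub>R v k) \<and> c i = c' i"
        using st ur True u by blast
    next
      fix l assume "\<exists>\<sigma>'\<in>F. \<exists>c'. u \<in> rel_interior (pos_hull v \<sigma>') \<and> i \<in> \<sigma>' \<and>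
                          u = (\<Sum>k\<in>\<sigma>'. c' k *\<^sub>R v k) \<and> l = c' i"
      then obtain \<sigma>' c' where h: "\<sigma>' \<in> F" "u \<in> rel_interior (pos_hull v \<sigma>')"
        "u = (\<Sum>k\<in>\<sigma>'. c' k *\<^sub>R v k)" "l = c' i" by blast
      have "\<sigma>' = \<sigma>" using uniq h(1,2) by blast
      then have "(\<Sum>k\<in>\<sigma>. c' k *\<^sub>R v k) = (\<Sum>k\<in>\<sigma>. c k *\<^sub>R v k)" using h(3) u by simp
      then have "c' i = c i" using coef_unique[OF sf_facts(1)[OF sf st] sf_facts(3,2)[OF sf st] True, of c' c] by blast
      then show "l = c i" using h(4) by simp
    qed
    then show ?thesis unfolding fan_coord_def using ex True by simp
  next
    case False
    have "\<not> (\<exists>\<sigma>\<in>F. u \<in> rel_interior (pos_hull v \<sigma>) \<and> i \<in> \<sigma>)"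
      using uniq False by blast
    then have "fan_coord v F u i = 0" unfolding fan_coord_def by (rule if_not_P)
    then show ?thesis using False by simp
  qed
qed

lemma fan_complete:
  fixes v :: "nat \<Rightarrow> real^'d"
  assumes sf: "simplicial_fan n v F" and pf: "polytopal_fan v F"
  shows "\<exists>\<sigma>\<in>F. \<exists>c. (\<forall>i\<in>\<sigma>. 0 < c i) \<and> u = (\<Sum>i\<in>\<sigma>. c i *\<^sub>R v i)"
proof -
  obtain P where P: "polytope P"
    "{pos_hull v \<sigma> | \<sigma>. \<sigma> \<in> F} = {normal_cone P G | G. G face_of P \<and> G \<noteq> {}}"
    using pf unfolding polytopal_fan_def by blast
  obtain \<sigma>0 where s0: "\<sigma>0 \<in> F" using sf_D(1)[OF sf] by blast
  have "pos_hull v \<sigma>0 \<in> {pos_hull v \<sigma> | \<sigma>. \<sigma> \<in> F}" using s0 by blast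
  then have "pos_hull v \<sigma>0 \<in> {normal_cone P G | G. G face_of P \<and> G \<noteq> {}}" by (simp only: P(2))
  then obtain G0 where G0: "G0 face_of P" "G0 \<noteq> {}" by blast
  have "G0 \<subseteq> P" using face_of_imp_subset[OF G0(1)] .
  then have Pne: "P \<noteq> {}" using G0(2) by blast
  have cP: "compact P" using P(1) polytope_imp_compact by blast
  have cvP: "convex P" using P(1) polytope_imp_convex by blast
  have cont: "continuous_on P (\<lambda>y. u \<bullet> y)" by (intro continuous_intros)
  obtain x where x: "x \<in> P" "\<forall>y\<in>P. u \<bullet> y \<le> u \<bullet> x"
    using continuous_attains_sup[OF cP Pne cont] by blast
  define G where "G = P \<inter> {y. u \<bullet> y = u \<bullet> x}"
  have "\<And>y. y \<in> P \<Longrightarrow> u \<bullet> y \<le> u \<bullet> x" using x(2) by blast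
  then have Gf: "G face_of P" unfolding G_def
    by (rule face_of_Int_supporting_hyperplane_le[OF cvP])
  have Gne: "G \<noteq> {}" unfolding G_def using x(1) by blast
  have un: "u \<in> normal_cone P G" unfolding normal_cone_def G_def using x(2) by auto
  have "normal_cone P G \<in> {normal_cone P G | G. G face_of P \<and> G \<noteq> {}}" using Gf Gne by blast
  then have "normal_cone P G \<in> {pos_hull v \<sigma> | \<sigma>. \<sigma> \<in> F}" by (simp only: P(2))
  then obtain \<sigma>1 where s1: "\<sigma>1 \<in> F" "normal_cone P G = pos_hull v \<sigma>1" by blast
  have "u \<in> pos_hull v \<sigma>1" using un s1(2) by simp
  then obtain c where c: "\<forall>i\<in>\<sigma>1. 0 \<le> c i" "u = (\<Sum>i\<in>\<sigma>1. c i *\<^sub>R v i)"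
    unfolding pos_hull_def by blast
  define \<sigma> where "\<sigma> = {i\<in>\<sigma>1. 0 < c i}"
  have sF: "\<sigma> \<in> F" by (rule sf_sub[OF sf s1(1)]) (auto simp: \<sigma>_def)
  have fin: "finite \<sigma>1" using sf_facts[OF sf s1(1)] by blast
  have "(\<Sum>i\<in>\<sigma>1. c i *\<^sub>R v i) = (\<Sum>i\<in>\<sigma>. c i *\<^sub>R v i)"
  proof (rule sum.mono_neutral_right[OF fin])
    show "\<sigma> \<subseteq> \<sigma>1" unfolding \<sigma>_def by blast
    show "\<forall>i\<in>\<sigma>1 - \<sigma>. c i *\<^sub>R v i = 0" using c(1) unfolding \<sigma>_def by force
  qed
  then have "u = (\<Sum>i\<in>\<sigma>. c i *\<^sub>R v i)" using c(2) by simp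
  moreover have "\<forall>i\<in>\<sigma>. 0 < c i" unfolding \<sigma>_def by blast
  ultimately show ?thesis using sF by blast
qed


definition gr :: "('m \<Rightarrow> nat set) \<Rightarrow> (nat \<times> 'm) set" where
  "gr s = {(i, j). i \<in> s j}"

definition cellU :: "(nat \<Rightarrow> real^'d) \<Rightarrow> ('m \<Rightarrow> nat set) \<Rightarrow> (real^'d^'m) set" where
  "cellU v s = {U. \<forall>j. U $ j \<in> pos_hull v (s j)}"

definition Rint :: "(nat \<Rightarrow> real^'d) \<Rightarrow> ('m \<Rightarrow> nat set) \<Rightarrow> (real^'d^'m) set" where
  "Rint v s = {U. \<forall>j. \<exists>c. (\<forall>i\<in>s j. 0 < c i) \<and> U $ j = (\<Sum>i\<in>s j. c i *\<^sub>R v i)}"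

lemma gr_inj: "gr s = gr s' \<Longrightarrow> s = s'"
proof (rule ext)
  fix j assume h: "gr s = gr s'"
  show "s j = s' j"
  proof (rule set_eqI)
    fix i
    have "(i \<in> s j) = ((i, j) \<in> gr s)" unfolding gr_def by simp
    also have "\<dots> = ((i, j) \<in> gr s')" using h by simp
    also have "\<dots> = (i \<in> s' j)" unfolding gr_def by simp
    finally show "(i \<in> s j) = (i \<in> s' j)" .
  qed
qed

lemma graph_char:
  fixes U :: "real^'d^'m"
  assumes sf: "simplicial_fan n v F" and s: "\<forall>j. s j \<in> F"
    and c: "\<forall>j. \<forall>i\<in>s j. 0 < c j i" and U: "\<forall>j. U $ j = (\<Sum>i\<in>s j. c j i *\<^sub>R v i)"
  shows "graph_of n v F U = gr s"
proof (rule set_eqI)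
  fix p :: "nat \<times> 'm"
  obtain i j where p: "p = (i, j)" by (cases p) blast
  have fc: "fan_coord v F (U $ j) i = (if i \<in> s j then c j i else 0)"
    using fan_coord_eq[OF sf s[rule_format, of j], of "c j" "U $ j" i] c U by blast
  have "i \<in> s j \<Longrightarrow> i < n" using sf_facts(4)[OF sf s[rule_format, of j]] by auto
  then show "p \<in> graph_of n v F U \<longleftrightarrow> p \<in> gr s"
    unfolding p graph_of_def gr_def using fc c by auto
qed

lemma graph_exists:
  fixes U :: "real^'d^'m"
  assumes sf: "simplicial_fan n v F" and pf: "polytopal_fan v F"
  shows "\<exists>s. (\<forall>j. s j \<in> F) \<and> graph_of n v F U = gr s \<and> U \<in> Rint v s"
proof -
  have "\<forall>j. \<exists>\<sigma>. \<sigma> \<in> F \<and> (\<exists>c. (\<forall>i\<in>\<sigma>. 0 < c i) \<and> U $ j = (\<Sum>i\<in>\<sigma>. c i *\<^sub>R v i))"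
    using fan_complete[OF sf pf] by blast
  from choice[OF this] obtain s where s: "\<forall>j. s j \<in> F \<and>
      (\<exists>c. (\<forall>i\<in>s j. 0 < c i) \<and> U $ j = (\<Sum>i\<in>s j. c i *\<^sub>R v i))" by blast
  have "\<forall>j. \<exists>c. (\<forall>i\<in>s j. 0 < c i) \<and> U $ j = (\<Sum>i\<in>s j. c i *\<^sub>R v i)" using s by blast
  from choice[OF this] obtain c where c: "\<forall>j. (\<forall>i\<in>s j. 0 < c j i) \<and> U $ j = (\<Sum>i\<in>s j. c j i *\<^sub>R v i)"
    by blast
  have sF: "\<forall>j. s j \<in> F" using s by blast
  have "graph_of n v F U = gr s"
    by (rule graph_char[OF sf sF, of c]) (use c in blast)+
  moreover have "U \<in> Rint v s" unfolding Rint_def using s by blast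
  ultimately show ?thesis using sF by blast
qed

lemma U_of_gr:
  assumes sf: "simplicial_fan n v F" and pf: "polytopal_fan v F" and sF: "\<forall>j. s j \<in> F"
  shows "(U_of n v F (gr s) :: (real^'d^'m) set) = Rint v s"
proof (rule set_eqI, rule iffI)
  fix U :: "real^'d^'m" assume "U \<in> U_of n v F (gr s)"
  then have g: "graph_of n v F U = gr s" unfolding U_of_def by blast
  obtain s' where s': "\<forall>j. s' j \<in> F" "graph_of n v F U = gr s'" "U \<in> Rint v s'"
    using graph_exists[OF sf pf] by blast
  have "s' = s" using gr_inj g s'(2) by metis
  then show "U \<in> Rint v s" using s'(3) by simp
next
  fix U :: "real^'d^'m" assume "U \<in> Rint v s"
  then have "\<forall>j. \<exists>c. (\<forall>i\<in>s j. 0 < c i) \<and> U $ j = (\<Sum>i\<in>s j. c i *\<^sub>R v i)" unfolding Rint_def by blast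
  from choice[OF this] obtain c where c: "\<forall>j. (\<forall>i\<in>s j. 0 < c j i) \<and> U $ j = (\<Sum>i\<in>s j. c j i *\<^sub>R v i)"
    by blast
  have "graph_of n v F U = gr s"
    by (rule graph_char[OF sf sF, of c]) (use c in blast)+
  then show "U \<in> U_of n v F (gr s)" unfolding U_of_def by blast
qed

lemma cell_closed:
  assumes sf: "simplicial_fan n v F" and sF: "\<forall>j. s j \<in> F"
  shows "closed (cellU v s)"
  unfolding cellU_def
proof (rule closed_vector_box, rule allI)
  fix j
  show "closed (pos_hull v (s j))"
    using pos_hull_closed sf_facts(1-3)[OF sf sF[rule_format, of j]] by blast
qed

lemma closure_Rint:
  fixes v :: "nat \<Rightarrow> real^'d" and s :: "'m::finite \<Rightarrow> nat set"
  assumes sf: "simplicial_fan n v F" and sF: "\<forall>j. s j \<in> F"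
  shows "closure (Rint v s) = cellU v s"
proof (rule antisym)
  have "Rint v s \<subseteq> cellU v s"
  proof
    fix U assume "U \<in> Rint v s"
    then have "\<forall>j. \<exists>c. (\<forall>i\<in>s j. 0 < c i) \<and> U $ j = (\<Sum>i\<in>s j. c i *\<^sub>R v i)" unfolding Rint_def by blast
    then have "\<forall>j. \<exists>c. (\<forall>i\<in>s j. 0 \<le> c i) \<and> U $ j = (\<Sum>i\<in>s j. c i *\<^sub>R v i)"
      by (meson less_imp_le)
    then show "U \<in> cellU v s" unfolding cellU_def pos_hull_def by blast
  qed
  then show "closure (Rint v s) \<subseteq> cellU v s"
    using closure_minimal cell_closed[OF sf sF] by blast
next
  show "cellU v s \<subseteq> closure (Rint v s)"
  proof
    fix U assume "U \<in> cellU v s"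
    then have "\<forall>j. \<exists>a. (\<forall>i\<in>s j. 0 \<le> a i) \<and> U $ j = (\<Sum>i\<in>s j. a i *\<^sub>R v i)"
      unfolding cellU_def pos_hull_def by blast
    from choice[OF this] obtain a where a: "\<forall>j. (\<forall>i\<in>s j. 0 \<le> a j i) \<and> U $ j = (\<Sum>i\<in>s j. a j i *\<^sub>R v i)"
      by blast
    define W :: "real^'d^'m" where "W = (\<chi> j. \<Sum>i\<in>s j. 1 *\<^sub>R v i)"
    show "U \<in> closure (Rint v s)"
      unfolding closure_approachable
    proof (intro allI impI)
      fix e :: real assume e: "0 < e"
      define t where "t = e / (norm W + 1)"
      have tpos: "0 < t" unfolding t_def using e by (simp add: add_nonneg_pos)
      have Y: "U + t *\<^sub>R W \<in> Rint v s"
        unfolding Rint_def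
      proof (intro CollectI allI)
        fix j
        have "(U + t *\<^sub>R W) $ j = 1 *\<^sub>R (\<Sum>i\<in>s j. a j i *\<^sub>R v i) + t *\<^sub>R (\<Sum>i\<in>s j. 1 *\<^sub>R v i)"
          using a unfolding W_def by simp
        also have "\<dots> = (\<Sum>i\<in>s j. (1 * a j i + t * 1) *\<^sub>R v i)" by (rule lin_comb_sum)
        finally have eq: "(U + t *\<^sub>R W) $ j = (\<Sum>i\<in>s j. (1 * a j i + t * 1) *\<^sub>R v i)" .
        have "\<forall>i\<in>s j. 0 < 1 * a j i + t * 1" using a tpos by (simp add: add_nonneg_pos)
        then show "\<exists>c. (\<forall>i\<in>s j. 0 < c i) \<and> (U + t *\<^sub>R W) $ j = (\<Sum>i\<in>s j. c i *\<^sub>R v i)"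
          using eq by (intro exI[of _ "\<lambda>i. 1 * a j i + t * 1"]) simp
      qed
      have "dist (U + t *\<^sub>R W) U = t * norm W" using tpos by (simp add: dist_norm)
      also have "\<dots> < e"
      proof -
        have "norm W + 1 > 0" by (simp add: add_nonneg_pos)
        then have "t * (norm W + 1) = e" unfolding t_def by simp
        then show ?thesis using tpos by (simp add: algebra_simps)
      qed
      finally show "\<exists>y\<in>Rint v s. dist y U < e" using Y by blast
    qed
  qed
qed


lemma cell_inj:
  fixes v :: "nat \<Rightarrow> real^'d" and s s' :: "'m::finite \<Rightarrow> nat set"
  assumes sf: "simplicial_fan n v F" and sF: "\<forall>j. s j \<in> F" and sF': "\<forall>j. s' j \<in> F"
    and eq: "cellU v s = cellU v s'"
  shows "s = s'"
proof (rule ext)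
  fix j
  have sub: "pos_hull v (a j) \<subseteq> pos_hull v (b j)"
    if ab: "cellU v a = cellU v b" for a b :: "'m \<Rightarrow> nat set"
  proof
    fix x assume x: "x \<in> pos_hull v (a j)"
    define U :: "real^'d^'m" where "U = (\<chi> k. if k = j then x else 0)"
    have "U \<in> cellU v a" unfolding cellU_def U_def using x zero_in_pos_hull by auto
    then have "U \<in> cellU v b" using ab by simp
    then have "U $ j \<in> pos_hull v (b j)" unfolding cellU_def by blast
    then show "x \<in> pos_hull v (b j)" unfolding U_def by simp
  qed
  have peq: "pos_hull v (s j) = pos_hull v (s' j)"
    using sub[OF eq] sub[OF eq[symmetric]] by blast
  define u where "u = (\<Sum>i\<in>s j. 1 *\<^sub>R v i)"
  have "u \<in> rel_interior (pos_hull v (s j))"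
    unfolding sf_relint[OF sf sF[rule_format, of j]] u_def
    by (intro CollectI exI[of _ "\<lambda>i. 1"]) simp
  then have "u \<in> rel_interior (pos_hull v (s' j))" using peq by simp
  then show "s j = s' j"
    using relint_unique[OF sf sF[rule_format, of j] sF'[rule_format, of j]] \<open>u \<in> rel_interior (pos_hull v (s j))\<close>
    by blast
qed

lemma matching_bound:
  fixes G :: "(nat \<times> 'm::finite) set"
  assumes "has_matching G k"
  shows "k \<le> CARD('m)"
proof -
  obtain M where M: "M \<subseteq> G" "finite M" "card M = k" "inj_on fst M" "inj_on snd M"
    using assms unfolding has_matching_def by blast
  have "k = card (snd ` M)" using card_image[OF M(5)] M(3) by simp
  also have "\<dots> \<le> CARD('m)" by (rule card_mono) auto
  finally show ?thesis .
qed

theorem lemma3p11: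
  fixes n :: nat and v :: "nat \<Rightarrow> real^'d" and F :: "nat set set"
  assumes "simplicial_fan n v F" and "polytopal_fan v F"
  shows "((Upsilon n v F :: (real^'d^'m::finite) set set) \<subset> Delta_pow v F)
           \<longleftrightarrow> n \<le> CARD('m)"
proof -
  note sf = assms(1) and pf = assms(2)
  define S where "S = {s :: 'm \<Rightarrow> nat set. \<forall>j. s j \<in> F}"
  have D: "(Delta_pow v F :: (real^'d^'m) set set) = cellU v ` S"
    unfolding Delta_pow_def cellU_def S_def image_def by blast
  have rg: "range (graph_of n v F :: real^'d^'m \<Rightarrow> _) = gr ` S"
  proof (rule antisym)
    show "range (graph_of n v F :: real^'d^'m \<Rightarrow> _) \<subseteq> gr ` S"
    proof
      fix G assume "G \<in> range (graph_of n v F :: real^'d^'m \<Rightarrow> _)"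
      then obtain U :: "real^'d^'m" where "G = graph_of n v F U" by blast
      moreover obtain s where "\<forall>j. s j \<in> F" "graph_of n v F U = gr s"
        using graph_exists[OF sf pf, of U] by blast
      ultimately show "G \<in> gr ` S" unfolding S_def by blast
    qed
  next
    show "gr ` S \<subseteq> range (graph_of n v F :: real^'d^'m \<Rightarrow> _)"
    proof
      fix G assume "G \<in> gr ` S"
      then obtain s where s: "\<forall>j. s j \<in> F" "G = gr s" unfolding S_def by blast
      define U :: "real^'d^'m" where "U = (\<chi> j. \<Sum>i\<in>s j. 1 *\<^sub>R v i)"
      have "graph_of n v F U = gr s"
        by (rule graph_char[OF sf s(1), of "\<lambda>j i. 1"]) (simp_all add: U_def)
      then show "G \<in> range (graph_of n v F :: real^'d^'m \<Rightarrow> _)" using s(2) by (metis rangeI)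
    qed
  qed
  have cl: "closure (U_of n v F (gr s) :: (real^'d^'m) set) = cellU v s" if "s \<in> S" for s
    using U_of_gr[OF sf pf, of s] closure_Rint[OF sf, of s] that unfolding S_def by simp
  have Ups: "(Upsilon n v F :: (real^'d^'m) set set) = cellU v ` {s\<in>S. \<not> has_matching (gr s) n}"
  proof (rule set_eqI, rule iffI)
    fix C :: "(real^'d^'m) set"
    assume "C \<in> Upsilon n v F"
    then obtain G where G: "C = closure (U_of n v F G)" "G \<in> range (graph_of n v F :: real^'d^'m \<Rightarrow> _)"
      "\<not> has_matching G n" unfolding Upsilon_def by blast
    then obtain s where s: "s \<in> S" "G = gr s" using rg by blast
    then show "C \<in> cellU v ` {s\<in>S. \<not> has_matching (gr s) n}" using G cl[OF s(1)] by blast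
  next
    fix C :: "(real^'d^'m) set"
    assume "C \<in> cellU v ` {s\<in>S. \<not> has_matching (gr s) n}"
    then obtain s where s: "s \<in> S" "\<not> has_matching (gr s) n" "C = cellU v s" by blast
    have "gr s \<in> range (graph_of n v F :: real^'d^'m \<Rightarrow> _)" using rg s(1) by blast
    then show "C \<in> Upsilon n v F" unfolding Upsilon_def using s cl[OF s(1)] by force
  qed
  show ?thesis
  proof (cases "n \<le> CARD('m)")
    case True
    obtain e :: "nat \<Rightarrow> 'm" where e: "inj_on e {0..<n}"
      using card_le_inj[of "{0..<n}" "UNIV :: 'm set"] True by auto
    define s0 where "s0 j = {i. i < n \<and> e i = j}" for j
    obtain \<sigma>0 where s0F: "\<sigma>0 \<in> F" using sf_D(1)[OF sf] by blast
    have s0S: "s0 \<in> S" unfolding S_def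
    proof (intro CollectI allI)
      fix j
      show "s0 j \<in> F"
      proof (cases "\<exists>i<n. e i = j")
        case True
        then obtain i where i: "i < n" "e i = j" by blast
        have "s0 j = {i}" unfolding s0_def using i e by (auto simp: inj_on_def)
        then show ?thesis using sf_D(4)[OF sf] i(1) by simp
      next
        case False
        then have "s0 j \<subseteq> \<sigma>0" unfolding s0_def by blast
        then show ?thesis using sf_sub[OF sf s0F] by blast
      qed
    qed
    have hm: "has_matching (gr s0) n"
      unfolding has_matching_def
    proof (intro exI[of _ "(\<lambda>i. (i, e i)) ` {0..<n}"] conjI)
      show "(\<lambda>i. (i, e i)) ` {0..<n} \<subseteq> gr s0" unfolding gr_def s0_def by auto
      show "finite ((\<lambda>i. (i, e i)) ` {0..<n})" by simp
      have "inj_on (\<lambda>i. (i, e i)) {0..<n}" by (auto simp: inj_on_def)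
      then show "card ((\<lambda>i. (i, e i)) ` {0..<n}) = n" by (simp add: card_image)
      show "inj_on fst ((\<lambda>i. (i, e i)) ` {0..<n})" by (auto simp: inj_on_def)
      show "inj_on snd ((\<lambda>i. (i, e i)) ` {0..<n})" using e by (auto simp: inj_on_def)
    qed
    have notin: "cellU v s0 \<notin> (Upsilon n v F :: (real^'d^'m) set set)"
    proof
      assume "cellU v s0 \<in> (Upsilon n v F :: (real^'d^'m) set set)"
      then obtain s' where s': "s' \<in> S" "\<not> has_matching (gr s') n" "cellU v s0 = cellU v s'"
        unfolding Ups by blast
      have "s0 = s'" using cell_inj[OF sf _ _ s'(3)] s0S s'(1) unfolding S_def by blast
      then show False using hm s'(2) by simp
    qed
    have "cellU v s0 \<in> (Delta_pow v F :: (real^'d^'m) set set)" unfolding D using s0S by blast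
    moreover have "(Upsilon n v F :: (real^'d^'m) set set) \<subseteq> Delta_pow v F" unfolding Ups D by blast
    ultimately show ?thesis using notin True by blast
  next
    case False
    have "\<not> has_matching (gr s) n" for s :: "'m \<Rightarrow> nat set"
      using matching_bound[of "gr s" n] False by linarith
    then have "(Upsilon n v F :: (real^'d^'m) set set) = Delta_pow v F" unfolding Ups D by simp
    then show ?thesis using False by simp
  qed
qed

end
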